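(* Let $(u,x)\in\mathrm{Bur}_n$ and $(v,y)\in\mathrm{Bur}_k$. Then $(v,y)\le(u,x)$ if and only if $(v,y)^T\le(u,x)^T$.
   Context: $\mathrm{Cay}_n$ is the set of Cayley permutations of length $n$ (words of positive integers in which every integer from $1$ to the maximum occurs), $\mathrm{WI}_n$ its weakly increasing elements. A pair $(u,v)\in\mathrm{WI}_n\times\mathrm{Cay}_n$ is a biword with columns $\binom{u(i)}{v(i)}$. The Burge transpose $(u,v)^T$ turns every column $\binom{a}{b}$ into $\binom{b}{a}$ and sorts the columns increasingly by top entry, ties by decreasing bottom entry. With $\mathrm{Des}(v)=\{i:v(i)\ge v(i+1)\}$, $\mathrm{Bur}_n=\{(u,v)\in\mathrm{WI}_n\times\mathrm{Cay}_n:\mathrm{Des}(u)\subseteq\mathrm{Des}(v)\}$; $T$ maps $\mathrm{Bur}_n$ to itself. Two words $a,b$ of the same length $k$ are order isomorphic if $a(s)<a(t)\iff b(s)<b(t)$ and $a(s)=a(t)\iff b(s)=b(t)$. For $(u',v')\in\mathrm{Bur}_k$, $(u,v)\in\mathrm{Bur}_n$: $(u',v')\le(u,v)$ iff there are indices $i_1<\dots<i_k$ such that $u(i_1)\cdots u(i_k)$ is order isomorphic to $u'$ and $v(i_1)\cdots v(i_k)$ is order isomorphic to $v'$. *)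

theory Defs
  imports Main "HOL-Library.Product_Lexorder"
begin

text \<open>Words of positive integers are modelled as lists of naturals; positions are 0-indexed.\<close>

definition cayley :: "nat list \<Rightarrow> bool" where
  "cayley w \<longleftrightarrow> (\<forall>a\<in>set w. 1 \<le> a \<and> (\<forall>b. 1 \<le> b \<and> b \<le> a \<longrightarrow> b \<in> set w))"

definition Cay :: "nat \<Rightarrow> nat list set" where
  "Cay n = {w. length w = n \<and> cayley w}"

definition WI :: "nat \<Rightarrow> nat list set" where
  "WI n = {w. w \<in> Cay n \<and> sorted w}"

definition Des :: "nat list \<Rightarrow> nat set" where
  "Des v = {i. Suc i < length v \<and> v ! i \<ge> v ! Suc i}"

definition Bur :: "nat \<Rightarrow> (nat list \<times> nat list) set" where
  "Bur n = {(u, v). u \<in> WI n \<and> v \<in> Cay n \<and> Des u \<subseteq> Des v}"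

definition burge_transpose :: "nat list \<times> nat list \<Rightarrow> nat list \<times> nat list" where
  "burge_transpose p =
     (let cols = sort_key (\<lambda>(a, b). (a, - int b)) (zip (snd p) (fst p))
      in (map fst cols, map snd cols))"

definition order_iso :: "nat list \<Rightarrow> nat list \<Rightarrow> bool" where
  "order_iso a b \<longleftrightarrow> length a = length b \<and>
     (\<forall>s < length a. \<forall>t < length a.
        (a ! s < a ! t \<longleftrightarrow> b ! s < b ! t) \<and> (a ! s = a ! t \<longleftrightarrow> b ! s = b ! t))"

definition bw_contained :: "nat list \<times> nat list \<Rightarrow> nat list \<times> nat list \<Rightarrow> bool" where
  "bw_contained p q \<longleftrightarrow>
     (\<exists>idx :: nat list. length idx = length (fst p) \<and> sorted_wrt (<) idx \<and>
        (\<forall>j\<in>set idx. j < length (fst q)) \<and>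
        order_iso (map (\<lambda>j. fst q ! j) idx) (fst p) \<and>
        order_iso (map (\<lambda>j. snd q ! j) idx) (snd p))"

end

theory Submission
  imports Defs "HOL-Library.Sublist" "HOL-Library.Multiset"
begin

definition bk :: "nat \<times> nat \<Rightarrow> nat \<times> int" where
  "bk = (\<lambda>(a, b). (a, - int b))"

definition sw :: "nat \<times> nat \<Rightarrow> nat \<times> nat" where
  "sw = (\<lambda>(a, b). (b, a))"

lemma inj_bk: "inj_on bk A"
  by (auto simp: bk_def inj_on_def)

lemma subseq_idx1:
  "subseq S Q \<Longrightarrow> \<exists>idx. sorted_wrt (<) idx \<and> (\<forall>j\<in>set idx. j < length Q) \<and> S = map ((!) Q) idx"
proof (induction Q arbitrary: S)
  case Nil
  then show ?case by (intro exI[of _ "[]"]) auto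
next
  case (Cons a Q)
  show ?case
  proof (cases S)
    case Nil
    then show ?thesis by (intro exI[of _ "[]"]) auto
  next
    case (Cons b S')
    have "(b = a \<and> subseq S' Q) \<or> subseq S Q"
      using Cons.prems Cons by (auto split: if_splits)
    then show ?thesis
    proof
      assume h: "b = a \<and> subseq S' Q"
      then obtain idx where "sorted_wrt (<) idx" "\<forall>j\<in>set idx. j < length Q" "S' = map ((!) Q) idx"
        using Cons.IH by blast
      then show ?thesis using h Cons
        by (intro exI[of _ "0 # map Suc idx"]) (auto simp: sorted_wrt_map)
    next
      assume "subseq S Q"
      then obtain idx where "sorted_wrt (<) idx" "\<forall>j\<in>set idx. j < length Q" "S = map ((!) Q) idx"
        using Cons.IH by blast
      then show ?thesis
        by (intro exI[of _ "map Suc idx"]) (auto simp: sorted_wrt_map)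
    qed
  qed
qed

lemma sorted_pred:
  assumes "sorted_wrt (<) (xs::nat list)" "\<forall>j\<in>set xs. j > 0"
  shows "sorted_wrt (<) (map (\<lambda>j. j - 1) xs)"
  unfolding sorted_wrt_map
  by (rule sorted_wrt_mono_rel[OF _ assms(1)]) (use assms(2) in auto)

lemma subseq_idx2:
  "sorted_wrt (<) idx \<Longrightarrow> (\<forall>j\<in>set idx. j < length Q) \<Longrightarrow> subseq (map ((!) Q) idx) Q"
proof (induction Q arbitrary: idx)
  case Nil
  then show ?case by (cases idx) auto
next
  case (Cons a Q)
  show ?case
  proof (cases idx)
    case Nil
    then show ?thesis by auto
  next
    case (Cons i rest)
    show ?thesis
    proof (cases "i = 0")
      case True
      let ?r = "map (\<lambda>j. j - 1) rest"
      have pos: "\<forall>j\<in>set rest. j > 0" using Cons.prems Cons True by auto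
      have "sorted_wrt (<) ?r" using Cons.prems Cons pos sorted_pred by simp
      moreover have "\<forall>j\<in>set ?r. j < length Q" using Cons.prems Cons pos by auto
      ultimately have ss: "subseq (map ((!) Q) ?r) Q" using Cons.IH by blast
      have "map ((!) (a # Q)) rest = map ((!) Q) ?r"
        using pos by (auto simp: nth_Cons')
      then have eq: "map ((!) (a # Q)) idx = a # map ((!) Q) ?r" using Cons True by simp
      show ?thesis unfolding eq using ss by (rule subseq_Cons2)
    next
      case False
      let ?r = "map (\<lambda>j. j - 1) idx"
      have pos: "\<forall>j\<in>set idx. j > 0" using Cons.prems Cons False by auto
      have "sorted_wrt (<) ?r" using Cons.prems pos sorted_pred by blast
      moreover have "\<forall>j\<in>set ?r. j < length Q" using Cons.prems pos by auto
      ultimately have ss: "subseq (map ((!) Q) ?r) Q" using Cons.IH by blast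
      have eq: "map ((!) (a # Q)) idx = map ((!) Q) ?r"
        using pos by (auto simp: nth_Cons')
      show ?thesis unfolding eq using ss by (rule list_emb_Cons)
    qed
  qed
qed

lemma subseq_mset: "subseq S Q \<Longrightarrow> mset S \<subseteq># mset Q"
  by (induction rule: list_emb.induct) (auto intro: subset_mset.order_trans)

lemma oi_map: "strict_mono_on (set b) f \<Longrightarrow> order_iso (map f b) b"
  unfolding order_iso_def
  by (auto simp: strict_mono_on_def) (metis linorder_neqE_nat nth_mem order_less_irrefl order_less_asym)+

lemma oi_ex: "order_iso a b \<Longrightarrow> \<exists>f. strict_mono_on (set b) f \<and> a = map f b"
proof -
  assume oi: "order_iso a b"
  define f where "f z = a ! (SOME i. i < length b \<and> b ! i = z)" for z
  have fi: "f (b ! i) = a ! i" if "i < length b" for i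
  proof -
    have "\<exists>j. j < length b \<and> b ! j = b ! i" using that by blast
    then have "(SOME j. j < length b \<and> b ! j = b ! i) < length b \<and> b ! (SOME j. j < length b \<and> b ! j = b ! i) = b ! i"
      by (rule someI_ex)
    then show ?thesis using oi that unfolding f_def order_iso_def by metis
  qed
  have "strict_mono_on (set b) f"
  proof (rule strict_mono_onI)
    fix r s assume "r \<in> set b" "s \<in> set b" "r < s"
    then obtain i j where "i < length b" "j < length b" "r = b ! i" "s = b ! j"
      by (metis in_set_conv_nth)
    then show "f r < f s" using fi oi \<open>r < s\<close> unfolding order_iso_def by metis
  qed
  moreover have "a = map f b"
    using oi fi unfolding order_iso_def by (auto intro: nth_equalityI)
  ultimately show ?thesis by blast
qed

lemma sort_map_bk:
  assumes "\<And>p q. p \<in> set xs \<Longrightarrow> q \<in> set xs \<Longrightarrow> bk p < bk q \<Longrightarrow> bk (h p) < bk (h q)"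
  shows "sort_key bk (map h xs) = map h (sort_key bk xs)"
proof (rule sort_key_inj_key_eq)
  show "mset (map h xs) = mset (map h (sort_key bk xs))" by simp
  show "inj_on bk (set (map h xs))" by (rule inj_bk)
  have "sorted_wrt (\<lambda>p q. bk p \<le> bk q) (sort_key bk xs)"
    using sorted_sort_key[of bk xs] by (simp add: sorted_wrt_map)
  then have "sorted_wrt (\<lambda>p q. bk (h p) \<le> bk (h q)) (sort_key bk xs)"
  proof (rule sorted_wrt_mono_rel[rotated])
    fix p q assume "p \<in> set (sort_key bk xs)" "q \<in> set (sort_key bk xs)" "bk p \<le> bk q"
    then show "bk (h p) \<le> bk (h q)"
      proof (cases "p = q")
      case False
      then have "bk p \<noteq> bk q" using inj_bk[of UNIV] by (metis UNIV_I inj_on_def)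
      then have lt: "bk p < bk q" using \<open>bk p \<le> bk q\<close> by simp
      have "p \<in> set xs" "q \<in> set xs" using \<open>p \<in> set (sort_key bk xs)\<close> \<open>q \<in> set (sort_key bk xs)\<close> by simp_all
      then show ?thesis using assms[of p q] lt by simp
    qed simp
  qed
  then show "sorted (map bk (map h (sort_key bk xs)))" by (simp add: sorted_wrt_map)
qed

lemma sub_exists:
  "sorted (map bk L) \<Longrightarrow> mset M \<subseteq># mset L \<Longrightarrow> subseq (sort_key bk M) L"
proof (induction L arbitrary: M)
  case Nil
  then show ?case by simp
next
  case (Cons a L)
  show ?case
  proof (cases "a \<in> set M")
    case True
    have m: "mset (a # remove1 a M) = mset M" using True by simp
    have "sort_key bk M = sort_key bk (a # remove1 a M)"
      by (rule sort_key_eq_sort_key) (use m in \<open>simp_all add: inj_bk\<close>)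
    also have "\<dots> = insort_key bk a (sort_key bk (remove1 a M))" by simp
    also have "\<dots> = a # sort_key bk (remove1 a M)"
    proof (rule insort_is_Cons, rule ballI)
      fix z assume "z \<in> set (sort_key bk (remove1 a M))"
      then have "z \<in> set M" by (metis set_sort set_remove1_subset subsetD)
      then have "z \<in># mset M" by simp
      then have "z \<in># mset (a # L)" by (rule mset_subset_eqD[OF Cons.prems(2)])
      then have "z \<in> set (a # L)" by (simp only: set_mset_mset)
      then show "bk a \<le> bk z" using Cons.prems(1) by auto
    qed
    finally have eq: "sort_key bk M = a # sort_key bk (remove1 a M)" .
    have "mset (remove1 a M) \<subseteq># mset L"
      using Cons.prems(2) True by (metis m mset.simps(2) mset_subset_eq_add_mset_cancel)
    then have "subseq (sort_key bk (remove1 a M)) L" using Cons by simp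
    then show ?thesis unfolding eq by (rule subseq_Cons2)
  next
    case False
    note aM = False
    have "mset M \<subseteq># mset L"
      unfolding subseteq_mset_def
    proof
      fix z
      have c: "count (mset M) z \<le> count (mset (a # L)) z"
        using Cons.prems(2) unfolding subseteq_mset_def by blast
      show "count (mset M) z \<le> count (mset L) z"
      proof (cases "z = a")
        case True
        then have "count (mset M) z = 0" using aM by (simp add: count_eq_zero_iff)
        then show ?thesis by (metis zero_le)
      next
        case False
        then show ?thesis using c by simp
      qed
    qed
    then have "subseq (sort_key bk M) L" using Cons by simp
    then show ?thesis by (rule list_emb_Cons)
  qed
qed

lemma fwd_cols:
  assumes "subseq S Q" "order_iso (map fst S) (map fst P)" "order_iso (map snd S) (map snd P)"
  shows "\<exists>S'. subseq S' (sort_key bk (map sw Q)) \<and>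
    order_iso (map fst S') (map fst (sort_key bk (map sw P))) \<and>
    order_iso (map snd S') (map snd (sort_key bk (map sw P)))"
proof -
  obtain f where f: "strict_mono_on (set (map fst P)) f" "map fst S = map f (map fst P)"
    using oi_ex[OF assms(2)] by blast
  obtain g where g: "strict_mono_on (set (map snd P)) g" "map snd S = map g (map snd P)"
    using oi_ex[OF assms(3)] by blast
  define h where "h = (\<lambda>(a, b). (g a, f b))"
  have S0: "S = map (\<lambda>(a, b). (f a, g b)) P"
  proof -
    have "S = zip (map fst S) (map snd S)" by (simp add: zip_map_fst_snd)
    also have "\<dots> = zip (map f (map fst P)) (map g (map snd P))" using f g by simp
    also have "\<dots> = map (\<lambda>(a, b). (f a, g b)) P" by (induction P) auto
    finally show ?thesis .
  qed
  have S: "map sw S = map h (map sw P)"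
    unfolding S0 by (induction P) (auto simp: sw_def h_def)
  define P' where "P' = sort_key bk (map sw P)"
  define S' where "S' = sort_key bk (map sw S)"
  have sub: "subseq S' (sort_key bk (map sw Q))"
    unfolding S'_def
  proof (rule sub_exists)
    show "sorted (map bk (sort_key bk (map sw Q)))" by (rule sorted_sort_key)
    have "mset (map sw S) \<subseteq># mset (map sw Q)"
      using image_mset_subseteq_mono[OF subseq_mset[OF assms(1)]] by simp
    then show "mset (map sw S) \<subseteq># mset (sort_key bk (map sw Q))" by simp
  qed
  have S'eq: "S' = map h P'"
    unfolding S'_def S P'_def
  proof (rule sort_map_bk)
    fix p q assume p: "p \<in> set (map sw P)" and q: "q \<in> set (map sw P)" and lt: "bk p < bk q"
    obtain p1 p2 where pp: "p = (p1, p2)" by fastforce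
    obtain q1 q2 where qq: "q = (q1, q2)" by fastforce
    have m: "p1 \<in> set (map snd P)" "q1 \<in> set (map snd P)" "p2 \<in> set (map fst P)" "q2 \<in> set (map fst P)"
      using p q pp qq by (force simp: sw_def)+
    have "p1 < q1 \<or> (p1 = q1 \<and> q2 < p2)" using lt pp qq by (auto simp: bk_def less_prod_def)
    then have "g p1 < g q1 \<or> (g p1 = g q1 \<and> f q2 < f p2)"
      using m strict_mono_onD[OF f(1)] strict_mono_onD[OF g(1)] by blast
    then show "bk (h p) < bk (h q)" using pp qq by (auto simp: bk_def h_def less_prod_def)
  qed
  have setP': "set (map fst P') = set (map snd P)" "set (map snd P') = set (map fst P)"
    unfolding P'_def by (force simp: sw_def)+
  have "map fst S' = map g (map fst P')" "map snd S' = map f (map snd P')"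
    unfolding S'eq by (auto simp: h_def split: prod.splits)
  then have "order_iso (map fst S') (map fst P')" "order_iso (map snd S') (map snd P')"
    using oi_map[of "map fst P'" g] oi_map[of "map snd P'" f] f(1) g(1) setP' by simp_all
  then show ?thesis using sub unfolding P'_def by blast
qed

lemma bt_eq: "burge_transpose p =
  (map fst (sort_key bk (map sw (zip (fst p) (snd p)))), map snd (sort_key bk (map sw (zip (fst p) (snd p)))))"
  unfolding burge_transpose_def bk_def sw_def Let_def by (simp add: zip_commute[of "snd p"])

lemma bridge:
  assumes "length (fst p) = length (snd p)" "length (fst q) = length (snd q)"
  shows "bw_contained p q \<longleftrightarrow> (\<exists>S. subseq S (zip (fst q) (snd q)) \<and>
           order_iso (map fst S) (fst p) \<and> order_iso (map snd S) (snd p))"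
proof
  assume "bw_contained p q"
  then obtain idx where i: "length idx = length (fst p)" "sorted_wrt (<) idx"
    "\<forall>j\<in>set idx. j < length (fst q)"
    "order_iso (map (\<lambda>j. fst q ! j) idx) (fst p)" "order_iso (map (\<lambda>j. snd q ! j) idx) (snd p)"
    unfolding bw_contained_def by blast
  let ?S = "map ((!) (zip (fst q) (snd q))) idx"
  have "subseq ?S (zip (fst q) (snd q))" using i assms by (intro subseq_idx2) auto
  moreover have "map fst ?S = map (\<lambda>j. fst q ! j) idx" "map snd ?S = map (\<lambda>j. snd q ! j) idx"
    using i(3) assms by auto
  ultimately show "\<exists>S. subseq S (zip (fst q) (snd q)) \<and>
           order_iso (map fst S) (fst p) \<and> order_iso (map snd S) (snd p)" using i by metis
next
  assume "\<exists>S. subseq S (zip (fst q) (snd q)) \<and>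
           order_iso (map fst S) (fst p) \<and> order_iso (map snd S) (snd p)"
  then obtain S where S: "subseq S (zip (fst q) (snd q))" "order_iso (map fst S) (fst p)" "order_iso (map snd S) (snd p)"
    by blast
  obtain idx where i: "sorted_wrt (<) idx" "\<forall>j\<in>set idx. j < length (zip (fst q) (snd q))"
    "S = map ((!) (zip (fst q) (snd q))) idx" using subseq_idx1[OF S(1)] by blast
  have e1: "map fst S = map (\<lambda>j. fst q ! j) idx" and e2: "map snd S = map (\<lambda>j. snd q ! j) idx"
    using i(2,3) assms by auto
  have "length idx = length (fst p)" using S(2) i(3) unfolding order_iso_def by simp
  then show "bw_contained p q" unfolding bw_contained_def
  proof (intro exI[of _ idx] conjI)
    show "\<forall>j\<in>set idx. j < length (fst q)" using i(2) assms by simp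
    show "order_iso (map (\<lambda>j. fst q ! j) idx) (fst p)" using S(2) unfolding e1 .
    show "order_iso (map (\<lambda>j. snd q ! j) idx) (snd p)" using S(3) unfolding e2 .
  qed (use i in simp_all)
qed

lemma fwd:
  assumes "length (fst p) = length (snd p)" "length (fst q) = length (snd q)" "bw_contained p q"
  shows "bw_contained (burge_transpose p) (burge_transpose q)"
proof -
  let ?P = "zip (fst p) (snd p)" and ?Q = "zip (fst q) (snd q)"
  obtain S where S: "subseq S ?Q" "order_iso (map fst S) (fst p)" "order_iso (map snd S) (snd p)"
    using bridge[OF assms(1,2)] assms(3) by blast
  have "map fst ?P = fst p" "map snd ?P = snd p" using assms(1) by simp_all
  then obtain S' where S': "subseq S' (sort_key bk (map sw ?Q))"
    "order_iso (map fst S') (map fst (sort_key bk (map sw ?P)))"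
    "order_iso (map snd S') (map snd (sort_key bk (map sw ?P)))"
    using fwd_cols[of S ?Q ?P] S by auto
  have Lp: "length (fst (burge_transpose p)) = length (snd (burge_transpose p))" by (simp add: bt_eq)
  have Lq: "length (fst (burge_transpose q)) = length (snd (burge_transpose q))" by (simp add: bt_eq)
  have "zip (fst (burge_transpose q)) (snd (burge_transpose q)) = sort_key bk (map sw ?Q)"
    by (simp add: bt_eq zip_map_fst_snd)
  moreover have "fst (burge_transpose p) = map fst (sort_key bk (map sw ?P))"
    "snd (burge_transpose p) = map snd (sort_key bk (map sw ?P))" by (simp_all add: bt_eq)
  ultimately show ?thesis using bridge[OF Lp Lq] S' by metis
qed

lemma TT:
  assumes "length u = length x" "sorted (map bk (zip u x))"
  shows "burge_transpose (burge_transpose (u, x)) = (u, x)"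
proof -
  let ?Q = "zip u x"
  let ?C = "sort_key bk (map sw ?Q)"
  have "sort_key bk (map sw ?C) = sort_key bk ?Q"
  proof (rule sort_key_eq_sort_key)
    have "map sw (map sw L) = L" for L by (induction L) (auto simp: sw_def)
    then show "mset (map sw ?C) = mset ?Q" by (metis mset_map mset_sort)
  qed (simp add: inj_bk)
  also have "\<dots> = ?Q" using assms(2) by (rule sort_key_id_if_sorted)
  finally have e: "sort_key bk (map sw ?C) = ?Q" .
  show ?thesis
    unfolding bt_eq[of "burge_transpose (u, x)"] unfolding bt_eq[of "(u, x)"]
    using e assms(1) by (simp add: zip_map_fst_snd)
qed

lemma Bur_sorted:
  assumes "(u, x) \<in> Bur n"
  shows "length u = length x" "sorted (map bk (zip u x))"
proof -
  have u: "sorted u" "length u = n" and xl: "length x = n" and D: "Des u \<subseteq> Des x"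
    using assms by (auto simp: Bur_def WI_def Cay_def)
  then show "length u = length x" by simp
  show "sorted (map bk (zip u x))"
    unfolding sorted_wrt_iff_nth_Suc_transp[OF transp_on_le]
  proof (intro allI impI)
    fix i assume i: "Suc i < length (map bk (zip u x))"
    then have i1: "Suc i < length u" "Suc i < length x" by auto
    have le: "u ! i \<le> u ! Suc i" using u(1) i1 by (simp add: sorted_iff_nth_mono)
    show "map bk (zip u x) ! i \<le> map bk (zip u x) ! Suc i"
    proof (cases "u ! i = u ! Suc i")
      case True
      then have "i \<in> Des u" using i1 by (simp add: Des_def)
      then have "x ! i \<ge> x ! Suc i" using D by (auto simp: Des_def)
      then show ?thesis using True i1 by (simp add: bk_def)
    next
      case False
      then show ?thesis using le i1 by (simp add: bk_def)
    qed
  qed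
qed

theorem lemma4p6:
  fixes u x v y :: "nat list" and n k :: nat
  assumes "(u, x) \<in> Bur n" and "(v, y) \<in> Bur k"
  shows "bw_contained (v, y) (u, x) \<longleftrightarrow>
         bw_contained (burge_transpose (v, y)) (burge_transpose (u, x))"
proof
  note a = Bur_sorted[OF assms(1)] and b = Bur_sorted[OF assms(2)]
  show "bw_contained (v, y) (u, x) \<Longrightarrow>
         bw_contained (burge_transpose (v, y)) (burge_transpose (u, x))"
    by (rule fwd) (use a b in auto)
  assume h: "bw_contained (burge_transpose (v, y)) (burge_transpose (u, x))"
  have "bw_contained (burge_transpose (burge_transpose (v, y))) (burge_transpose (burge_transpose (u, x)))"
    by (rule fwd[OF _ _ h]) (simp_all add: bt_eq[of "(v,y)"] bt_eq[of "(u,x)"])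
  then show "bw_contained (v, y) (u, x)" using TT[OF a] TT[OF b] by simp
qed

end
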